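(* The map $G$ is strongly transitive on $(\mathcal{X},d)$: for all $x,y\in\mathcal{X}$ and every $r>0$ there exist $z\in\mathcal{X}$ with $d(z,x)\le r$ and $n\in\mathbb{N}^*$ such that $G^n(z)=y$.
   Context: Fix an integer $\mathsf{N}\ge 1$ and write $\llbracket a;b\rrbracket=\{a,a+1,\dots,b\}$. Let $f:\mathbb{Z}/4\mathbb{Z}\to\mathbb{Z}/4\mathbb{Z}$, $f(x)=x+1 \pmod 4$, with $f^{-1}(x)=x-1\pmod 4$ and $f^0=\mathrm{id}$. Let $\mathrm{sign}(x)=1$ if $x>0$, $0$ if $x=0$, $-1$ if $x<0$. For $k\in\llbracket -\mathsf{N};\mathsf{N}\rrbracket$ define $f_k:(\mathbb{Z}/4\mathbb{Z})^{\mathsf{N}}\to(\mathbb{Z}/4\mathbb{Z})^{\mathsf{N}}$ by $f_k(C_1,\dots,C_{\mathsf{N}})=(C_1,\dots,C_{|k|-1},f^{\mathrm{sign}(k)}(C_{|k|}),\dots,f^{\mathrm{sign}(k)}(C_{\mathsf{N}}))$ (so $f_0$ is the identity). Folding sequences are $F=(F^j)_{j\in\mathbb{N}}\in\llbracket -\mathsf{N};\mathsf{N}\rrbracket^{\mathbb{N}}$; let $i(F)=F^0$ and let $\sigma$ be the shift, $\sigma((F^j)_{j})=(F^{j+1})_{j}$. A finite sequence $(k_1,\dots,k_n)$ is identified with $(k_1,\dots,k_n,0,0,\dots)$. On $\check{\mathcal{X}}=(\mathbb{Z}/4\mathbb{Z})^{\mathsf{N}}\times\llbracket -\mathsf{N};\mathsf{N}\rrbracket^{\mathbb{N}}$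 define $G((C,F))=(f_{i(F)}(C),\sigma(F))$. SAW requirement: for $C\in(\mathbb{Z}/4\mathbb{Z})^{\mathsf{N}}$ let $p(C)=(X_0,\dots,X_{\mathsf{N}})\in(\mathbb{Z}^2)^{\mathsf{N}+1}$ with $X_0=(0,0)$ and $X_i=X_{i-1}+v(C_i)$, where $v(0)=(1,0)$, $v(1)=(0,-1)$, $v(2)=(-1,0)$, $v(3)=(0,1)$. $C$ satisfies the SAW requirement iff the points $X_0,\dots,X_{\mathsf{N}}$ are pairwise distinct. Let $\mathfrak{C}_{\mathsf{N}}$ be the set of $C\in(\mathbb{Z}/4\mathbb{Z})^{\mathsf{N}}$ for which there exist $n\ge1$ and $k_1,\dots,k_n\in\llbracket -\mathsf{N};\mathsf{N}\rrbracket$ such that $C$ is the first component of $G^n(((0,\dots,0),(k_1,\dots,k_n)))$ and, for every $i\le n$, the first component of $G^i(((0,\dots,0),(k_1,\dots,k_n)))$ satisfies the SAW requirement. Let $\mathcal{X}=\mathfrak{C}_{\mathsf{N}}\times\llbracket -\mathsf{N};\mathsf{N}\rrbracket^{\mathbb{N}}$ with metric $d((C,F),(\check C,\check F))=d_C(C,\check C)+d_F(F,\check F)$, where $d_C(C,\check C)=\sum_{k=1}^{\mathsf{N}}\delta(C_k,\check C_k)2^{\mathsf{N}-k}$ ($\delta(a,b)=0$ if $a=b$, $1$ otherwise) and $d_F(F,\check F)=\frac{9}{2\mathsf{N}}\sum_{k=0}^{\infty}\frac{|F^k-\check F^k|}{10^{k+1}}$. The paper regards $G$ as a self-map of $\mathcal{X}$.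 *)

theory Defs
  imports "HOL-Analysis.Analysis" "HOL-Library.Numeral_Type"
begin

text \<open>List position j (0-based) corresponds to index j+1 in the paper.\<close>

type_synonym conf = "4 list"
type_synonym fseq = "nat \<Rightarrow> int"

definition fold_k :: "int \<Rightarrow> conf \<Rightarrow> conf" where
  "fold_k k C = map (\<lambda>j. if \<bar>k\<bar> \<le> int (Suc j) then C ! j + of_int (sgn k) else C ! j)
                   [0..<length C]"

definition shift :: "fseq \<Rightarrow> fseq" where
  "shift F = (\<lambda>j. F (Suc j))"

definition G :: "conf \<times> fseq \<Rightarrow> conf \<times> fseq" where
  "G x = (fold_k (snd x 0) (fst x), shift (snd x))"

definition finseq :: "int list \<Rightarrow> fseq" where
  "finseq ks = (\<lambda>j. if j < length ks then ks ! j else 0)"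

definition v :: "4 \<Rightarrow> int \<times> int" where
  "v c = (if c = 0 then (1, 0) else if c = 1 then (0, -1) else if c = 2 then (-1, 0) else (0, 1))"

definition pos :: "conf \<Rightarrow> nat \<Rightarrow> int \<times> int" where
  "pos C i = (\<Sum>j<i. v (C ! j))"

definition saw :: "conf \<Rightarrow> bool" where
  "saw C \<longleftrightarrow> inj_on (pos C) {0..length C}"

definition frakC :: "nat \<Rightarrow> conf set" where
  "frakC N = {C. \<exists>ks. length ks \<ge> 1 \<and> set ks \<subseteq> {- int N..int N} \<and>
      fst ((G ^^ length ks) (replicate N 0, finseq ks)) = C \<and>
      (\<forall>i\<in>{1..length ks}. saw (fst ((G ^^ i) (replicate N 0, finseq ks))))}"

definition Xsp :: "nat \<Rightarrow> (conf \<times> fseq) set" where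
  "Xsp N = frakC N \<times> {F. \<forall>j. F j \<in> {- int N..int N}}"

definition dC :: "nat \<Rightarrow> conf \<Rightarrow> conf \<Rightarrow> real" where
  "dC N C C' = (\<Sum>k=1..N. (if C ! (k - 1) = C' ! (k - 1) then 0 else 1) * 2 ^ (N - k))"

definition dF :: "nat \<Rightarrow> fseq \<Rightarrow> fseq \<Rightarrow> real" where
  "dF N F F' = 9 / (2 * real N) * (\<Sum>k. real_of_int \<bar>F k - F' k\<bar> / 10 ^ (k + 1))"

definition dX :: "nat \<Rightarrow> conf \<times> fseq \<Rightarrow> conf \<times> fseq \<Rightarrow> real" where
  "dX N x y = dC N (fst x) (fst y) + dF N (snd x) (snd y)"

end

theory Submission
  imports Defs
begin

definition applyL :: "conf \<Rightarrow> int list \<Rightarrow> conf" where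
  "applyL C L = foldl (\<lambda>C k. fold_k k C) C L"

lemma length_fold_k[simp]: "length (fold_k k C) = length C"
  by (simp add: fold_k_def)

lemma length_applyL[simp]: "length (applyL C L) = length C"
  unfolding applyL_def by (induct L arbitrary: C) auto

lemma applyL_Nil[simp]: "applyL C [] = C"
  unfolding applyL_def by simp

lemma applyL_append: "applyL C (L1 @ L2) = applyL (applyL C L1) L2"
  unfolding applyL_def by simp

lemma applyL_Cons: "applyL C (k # L) = applyL (fold_k k C) L"
  unfolding applyL_def by simp

lemma G_pow:
  assumes "\<forall>j<length L. F j = L ! j"
  shows "(G ^^ length L) (C, F) = (applyL C L, \<lambda>j. F (j + length L))"
  using assms
proof (induct L arbitrary: C F)
  case Nil then show ?case by (simp add: applyL_def)
next
  case (Cons k L)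
  have h: "\<forall>j<length L. shift F j = L ! j" using Cons.prems by (auto simp: shift_def)
  have "(G ^^ length (k # L)) (C, F) = (G ^^ length L) (G (C, F))"
    by (simp only: funpow_Suc_right o_apply length_Cons)
  also have "G (C, F) = (fold_k k C, shift F)" using Cons.prems by (auto simp: G_def)
  also have "(G ^^ length L) (fold_k k C, shift F) = (applyL (fold_k k C) L, \<lambda>j. shift F (j + length L))"
    using Cons.hyps h by blast
  finally show ?case by (simp add: applyL_Cons shift_def)
qed

lemma G_pow_len: "length (fst ((G ^^ n) (C, F))) = length C"
proof (induct n arbitrary: C F)
  case 0 then show ?case by simp
next
  case (Suc n)
  have "(G ^^ Suc n) (C, F) = (G ^^ n) (G (C, F))" by (simp only: funpow_Suc_right o_apply length_Cons)
  then show ?case using Suc by (simp add: G_def)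
qed

lemma frakC_len: "C \<in> frakC N \<Longrightarrow> length C = N"
proof -
  assume "C \<in> frakC N"
  then obtain ks where "fst ((G ^^ length ks) (replicate N 0, finseq ks)) = C" unfolding frakC_def by blast
  then show ?thesis using G_pow_len[of "length ks" "replicate N 0" "finseq ks"] by simp
qed

lemma fold_one: "fold_k 1 C = map (\<lambda>x. x + 1) C"
  unfolding fold_k_def by (rule nth_equalityI) simp_all

lemma fold_succ: "k \<ge> 1 \<Longrightarrow> fold_k (k + 1) (c # C) = c # fold_k k C"
  unfolding fold_k_def
  apply (rule nth_equalityI)
  apply simp
  subgoal for i by (cases i) (auto simp del: upt_Suc simp: sgn_if)
  done

lemma applyL_one: "applyL C (replicate t 1) = map (\<lambda>x. x + of_nat t) C"
proof (induct t arbitrary: C)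
  case 0 then show ?case by simp
next
  case (Suc t)
  have "applyL C (replicate (Suc t) 1) = applyL (map (\<lambda>x. x + 1) C) (replicate t 1)"
    by (simp only: replicate_Suc applyL_Cons fold_one)
  also have "\<dots> = map (\<lambda>x. x + 1 + of_nat t) C" by (simp add: Suc)
  finally show ?case by (simp add: add.assoc add.commute)
qed
lemma applyL_succ: "set L \<subseteq> {1..} \<Longrightarrow> applyL (c # C) (map (\<lambda>k. k + 1) L) = c # applyL C L"
proof (induct L arbitrary: C)
  case Nil then show ?case by simp
next
  case (Cons k L)
  have "applyL (c # C) (map (\<lambda>k. k + 1) (k # L)) = applyL (fold_k (k+1) (c # C)) (map (\<lambda>k. k + 1) L)"
    by (simp only: list.map applyL_Cons)
  also have "\<dots> = applyL (c # fold_k k C) (map (\<lambda>k. k + 1) L)" using Cons.prems by (simp add: fold_succ)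
  also have "\<dots> = c # applyL (fold_k k C) L" using Cons by simp
  finally show ?case by (simp add: applyL_Cons)
qed

lemma of_nat_surj4: "\<exists>t. (x::4) = of_nat t"
proof (cases x rule: bit0.cases)
  case (1 z)
  then show ?thesis by (metis of_nat_nat of_int_of_nat_eq)
qed

lemma reach: "length C = length D \<Longrightarrow> \<exists>L. set L \<subseteq> {1..int (length C)} \<and> applyL C L = D"
proof (induct "length C" arbitrary: C D)
  case 0 then show ?case by (intro exI[of _ "[]"]) simp
next
  case (Suc n)
  then obtain c C0 where C: "C = c # C0" by (cases C) auto
  obtain d D' where D: "D = d # D'" using Suc.prems Suc.hyps(2) by (cases D) auto
  obtain t where t: "d - c = of_nat t" using of_nat_surj4 by blast
  let ?C2 = "map (\<lambda>x. x + of_nat t) C0"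
  have n: "n = length ?C2" using Suc.hyps(2) C by simp
  have "length ?C2 = length D'" using Suc.prems C D by simp
  then obtain L where L0: "set L \<subseteq> {1..int (length ?C2)}" "applyL ?C2 L = D'"
    using Suc.hyps(1)[OF n] by blast
  have L: "set L \<subseteq> {1..int (length C0)}" "applyL ?C2 L = D'" using L0 by simp_all
  let ?L = "replicate t 1 @ map (\<lambda>k. k + 1) L"
  have "applyL (c # C0) ?L = applyL ((c + of_nat t) # ?C2) (map (\<lambda>k. k + 1) L)"
    by (simp add: applyL_append applyL_one)
  also have "\<dots> = (c + of_nat t) # D'" using L by (subst applyL_succ) auto
  also have "c + of_nat t = d" using t by (simp add: algebra_simps)
  finally have "applyL C ?L = D" using C D by simp
  moreover have "set ?L \<subseteq> {1..int (length C)}" using L C by auto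
  ultimately show ?case by blast
qed

lemma dF_bound:
  assumes N: "N \<ge> 1" and B: "\<forall>k. \<bar>F k - F' k\<bar> \<le> 2 * int N" and E: "\<forall>k<m. F k = F' k"
  shows "dF N F F' \<le> (1/10)^m"
proof -
  define f where "f k = real_of_int \<bar>F k - F' k\<bar> / 10 ^ (k + 1)" for k
  define g where "g k = 2 * real N * (1/10)^m * (1/10) * (1/10)^k" for k
  have gs: "g sums (2 * real N * (1/10)^m * (1/10) * (1 / (1 - 1/10)))"
    unfolding g_def by (intro sums_mult geometric_sums) auto
  have fle: "f (k + m) \<le> g k" for k
  proof -
    have "real_of_int \<bar>F (k+m) - F' (k+m)\<bar> \<le> 2 * real N" using B[rule_format, of "k+m"] by linarith
    moreover have "(10::real) ^ (k + m + 1) > 0" by simp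
    ultimately have "f (k+m) \<le> 2 * real N / 10 ^ (k + m + 1)"
      unfolding f_def by (intro divide_right_mono) auto
    also have "\<dots> = g k" unfolding g_def by (simp add: power_add power_one_over field_simps)
    finally show ?thesis .
  qed
  have f0: "f k \<ge> 0" for k unfolding f_def by simp
  have sg: "summable (\<lambda>k. f (k + m))"
    by (rule summable_comparison_test'[OF sums_summable[OF gs]]) (use f0 fle in auto)
  have sf: "summable f" using sg summable_iff_shift by blast
  have "suminf f = suminf (\<lambda>k. f (k + m)) + sum f {..<m}"
    using suminf_split_initial_segment[OF sf, of m] by simp
  also have "sum f {..<m} = 0" using E unfolding f_def by simp
  also have "suminf (\<lambda>k. f (k + m)) \<le> suminf g"
    by (rule suminf_le) (use fle sg sums_summable[OF gs] in auto)
  also have "suminf g = 2 * real N * (1/10)^m * (1/9)" using sums_unique[OF gs] by simp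
  finally have "suminf f \<le> 2 * real N * (1/10)^m * (1/9)" by simp
  hence "9 / (2 * real N) * suminf f \<le> 9 / (2 * real N) * (2 * real N * (1/10)^m * (1/9))"
    using N by (intro mult_left_mono) auto
  also have "\<dots> = (1/10)^m" using N by (simp add: field_simps)
  finally show ?thesis unfolding dF_def f_def .
qed
lemma fold_zero[simp]: "fold_k 0 C = C"
  unfolding fold_k_def by (rule nth_equalityI) simp_all

theorem mainTheorem4:
  fixes N :: nat and x y :: "conf \<times> fseq" and r :: real
  assumes "N \<ge> 1" and "x \<in> Xsp N" and "y \<in> Xsp N" and "r > 0"
  shows "\<exists>z\<in>Xsp N. dX N z x \<le> r \<and> (\<exists>n::nat. n \<ge> 1 \<and> (G ^^ n) z = y)"
proof -
  obtain Cx Fx where x: "x = (Cx, Fx)" by (cases x)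
  obtain Cy Fy where y: "y = (Cy, Fy)" by (cases y)
  have Cx: "Cx \<in> frakC N" and Fx: "\<forall>j. Fx j \<in> {- int N..int N}" using assms(2) x by (auto simp: Xsp_def)
  have Cy: "Cy \<in> frakC N" and Fy: "\<forall>j. Fy j \<in> {- int N..int N}" using assms(3) y by (auto simp: Xsp_def)
  obtain m where m: "(1/10::real)^m < r" using real_arch_pow_inv[OF assms(4), of "1/10"] by auto
  define P0 where "P0 = map Fx [0..<m]"
  define C' where "C' = applyL Cx P0"
  have "length C' = length Cy" using frakC_len[OF Cx] frakC_len[OF Cy] by (simp add: C'_def)
  then obtain L where L: "set L \<subseteq> {1..int (length C')}" "applyL C' L = Cy" using reach by blast
  have lenC': "length C' = N" using frakC_len[OF Cx] by (simp add: C'_def)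
  define P where "P = P0 @ (0 # L)"
  define n where "n = length P"
  define F' where "F' j = (if j < n then P ! j else Fy (j - n))" for j
  have Pset: "set P \<subseteq> {- int N..int N}"
  proof -
    have "set P0 \<subseteq> {- int N..int N}" unfolding P0_def using Fx by auto
    moreover have "set L \<subseteq> {- int N..int N}" using L(1) lenC' by auto
    ultimately show ?thesis unfolding P_def by simp
  qed
  have F'r: "\<forall>j. F' j \<in> {- int N..int N}"
  proof
    fix j show "F' j \<in> {- int N..int N}"
    proof (cases "j < n")
      case True then have "P ! j \<in> set P" by (simp add: n_def)
      then show ?thesis using True Pset unfolding F'_def by auto
    next
      case False then show ?thesis using Fy unfolding F'_def by simp
    qed
  qed
  define z where "z = (Cx, F')"
  have zX: "z \<in> Xsp N" using Cx F'r by (simp add: z_def Xsp_def)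
  have Gz: "(G ^^ n) z = y"
  proof -
    have "(G ^^ length P) (Cx, F') = (applyL Cx P, \<lambda>j. F' (j + length P))"
      by (rule G_pow) (simp add: F'_def n_def)
    moreover have "applyL Cx P = Cy" using L by (simp add: P_def applyL_append applyL_Cons C'_def[symmetric])
    moreover have "(\<lambda>j. F' (j + length P)) = Fy" by (simp add: F'_def n_def)
    ultimately show ?thesis by (simp add: z_def y n_def)
  qed
  have n1: "n \<ge> 1" by (simp add: n_def P_def)
  have E: "\<forall>k<m. F' k = Fx k"
  proof (intro allI impI)
    fix k assume k: "k < m"
    have "k < n" using k by (simp add: n_def P_def P0_def)
    moreover have "P ! k = Fx k" using k by (simp add: P_def P0_def nth_append)
    ultimately show "F' k = Fx k" by (simp add: F'_def)
  qed
  have B: "\<forall>k. \<bar>F' k - Fx k\<bar> \<le> 2 * int N"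
  proof
    fix k show "\<bar>F' k - Fx k\<bar> \<le> 2 * int N" using F'r[rule_format, of k] Fx[rule_format, of k] by auto
  qed
  have "dF N F' Fx \<le> (1/10)^m" by (rule dF_bound[OF assms(1) B]) (use E in auto)
  moreover have "dC N Cx Cx = 0" by (simp add: dC_def)
  ultimately have "dX N z x \<le> r" using m by (simp add: dX_def z_def x)
  then show ?thesis using zX Gz n1 by blast
qed

end
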